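(* Let $n\ge 2$ and $1\le k\le n/2$ be integers, and let $w=\mathrm{A}^k\mathrm{M}^{n-k}$ be the word consisting of $k$ copies of a letter $\mathrm{A}$ followed by $n-k$ copies of a different letter $\mathrm{M}$. Then $f(w)=\max\{2(n-k)+1,\,4k\}$.
   Context: A word of length $n$ is a sequence $w=w_1w_2\cdots w_n$ of letters (symbols). Let $[n]=\{1,\dots,n\}$. An $n$-grid is a function $G:[n]^2\to\Sigma$, where $\Sigma$ is an arbitrary set of letters. The $i$th row of $G$ contains $w$ if $G(i,j)=w_j$ for all $1\le j\le n$, or $G(i,j)=w_{n-j+1}$ for all $1\le j\le n$. The $j$th column contains $w$ if $G(i,j)=w_i$ for all $i$, or $G(i,j)=w_{n-i+1}$ for all $i$. The main diagonal contains $w$ if $G(i,i)=w_i$ for all $i$ or $G(i,i)=w_{n-i+1}$ for all $i$; the anti-diagonal contains $w$ if $G(i,n-i+1)=w_i$ for all $i$ or $G(i,n-i+1)=w_{n-i+1}$ for all $i$. Let $f(w,G)$ be the number of the $2n+2$ lines ($n$ rows, $n$ columns, $2$ diagonals) of $G$ that contain $w$, and $f(w)=\max_G f(w,G)$ over all $n$-grids $G$. *)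

theory Defs
  imports Main
begin

text \<open>A word of length n is a function w :: nat => 'a, with letters w 1, ..., w n.
An n-grid is a function G :: nat => nat => 'a, only its values on {1..n} x {1..n} matter.\<close>

definition row_contains :: "nat \<Rightarrow> (nat \<Rightarrow> 'a) \<Rightarrow> (nat \<Rightarrow> nat \<Rightarrow> 'a) \<Rightarrow> nat \<Rightarrow> bool" where
  "row_contains n w G i \<longleftrightarrow>
     (\<forall>j\<in>{1..n}. G i j = w j) \<or> (\<forall>j\<in>{1..n}. G i j = w (n - j + 1))"

definition col_contains :: "nat \<Rightarrow> (nat \<Rightarrow> 'a) \<Rightarrow> (nat \<Rightarrow> nat \<Rightarrow> 'a) \<Rightarrow> nat \<Rightarrow> bool" where
  "col_contains n w G j \<longleftrightarrow>
     (\<forall>i\<in>{1..n}. G i j = w i) \<or> (\<forall>i\<in>{1..n}. G i j = w (n - i + 1))"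

definition diag_contains :: "nat \<Rightarrow> (nat \<Rightarrow> 'a) \<Rightarrow> (nat \<Rightarrow> nat \<Rightarrow> 'a) \<Rightarrow> bool" where
  "diag_contains n w G \<longleftrightarrow>
     (\<forall>i\<in>{1..n}. G i i = w i) \<or> (\<forall>i\<in>{1..n}. G i i = w (n - i + 1))"

definition antidiag_contains :: "nat \<Rightarrow> (nat \<Rightarrow> 'a) \<Rightarrow> (nat \<Rightarrow> nat \<Rightarrow> 'a) \<Rightarrow> bool" where
  "antidiag_contains n w G \<longleftrightarrow>
     (\<forall>i\<in>{1..n}. G i (n - i + 1) = w i) \<or> (\<forall>i\<in>{1..n}. G i (n - i + 1) = w (n - i + 1))"

definition lines_count :: "nat \<Rightarrow> (nat \<Rightarrow> 'a) \<Rightarrow> (nat \<Rightarrow> nat \<Rightarrow> 'a) \<Rightarrow> nat" where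
  "lines_count n w G =
     card {i\<in>{1..n}. row_contains n w G i} + card {j\<in>{1..n}. col_contains n w G j}
     + (if diag_contains n w G then 1 else 0) + (if antidiag_contains n w G then 1 else 0)"

text \<open>f(w) = max over all n-grids. Grid letters range over the letter type of w
(letters outside the word's alphabet never help a line contain w).\<close>
definition f_max :: "nat \<Rightarrow> (nat \<Rightarrow> 'a) \<Rightarrow> nat" where
  "f_max n w = Max {lines_count n w G | G. True}"

end

theory Submission
  imports Defs
begin

lemma arith5:
  fixes k m :: nat
  assumes "k \<ge> 1"
    and "mr \<Longrightarrow> \<not> (l \<and> r)" and "mc \<Longrightarrow> \<not> (t \<and> b)"
    and "dF \<Longrightarrow> \<not> (t \<and> r) \<and> \<not> (b \<and> l)"
    and "dA \<Longrightarrow> \<not> (t \<and> l) \<and> \<not> (b \<and> r)"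
  shows "(if t then k else 0) + (if mr then m else 0) + (if b then k else 0)
       + ((if l then k else 0) + (if mc then m else 0) + (if r then k else 0))
       + (if dF then 1 else 0) + (if dA then 1 else 0) \<le> max (2 * (m + k) + 1) (4 * k)"
  using assms by (cases t; cases b; cases mr; cases l; cases r; cases mc; cases dF; cases dA) (simp_all add: max_def)

definition cont :: "nat \<Rightarrow> nat \<Rightarrow> 'a \<Rightarrow> 'a \<Rightarrow> (nat \<Rightarrow> 'a) \<Rightarrow> bool" where
  "cont n k A M l \<longleftrightarrow> (\<forall>p\<in>{1..n}. l p = (if p \<le> k then A else M))
     \<or> (\<forall>p\<in>{1..n}. l p = (if n - p + 1 \<le> k then A else M))"

lemma L1: "cont n k A M l \<Longrightarrow> p \<in> {1..n} \<Longrightarrow> l p = A \<or> l p = M"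
  unfolding cont_def by (metis (full_types))

lemma L2: "cont n k A M l \<Longrightarrow> A \<noteq> M \<Longrightarrow> 2 * k \<le> n \<Longrightarrow> 1 \<le> p \<Longrightarrow> p \<le> k
   \<Longrightarrow> n - k < q \<Longrightarrow> q \<le> n \<Longrightarrow> l p \<noteq> l q"
  unfolding cont_def
  apply (elim disjE)
   apply (frule bspec[of _ _ p], simp, drule bspec[of _ _ q], simp, simp)
  apply (frule bspec[of _ _ p], simp, drule bspec[of _ _ q], simp, simp)
  done

lemma L3: "cont n k A M l \<Longrightarrow> k < p \<Longrightarrow> p \<le> n - k \<Longrightarrow> l p = M"
  unfolding cont_def
  apply (elim disjE)
    apply (drule bspec[of _ _ p], simp, simp)
  apply (drule bspec[of _ _ p], simp)
  apply (subgoal_tac "\<not> (n - p + 1 \<le> k)", simp, arith)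
  done

lemma card_split:
  assumes "2 * k \<le> n"
  shows "card {i\<in>{1..n}. P i} \<le> (if \<exists>i\<in>{1..k}. P i then k else 0)
     + (if \<exists>i\<in>{k+1..n-k}. P i then n - 2 * k else 0) + (if \<exists>i\<in>{n-k+1..n}. P i then k else 0)"
proof -
  define S1 where "S1 = (if \<exists>i\<in>{1..k}. P i then {1..k} else {})"
  define S2 where "S2 = (if \<exists>i\<in>{k+1..n-k}. P i then {k+1..n-k} else {})"
  define S3 where "S3 = (if \<exists>i\<in>{n-k+1..n}. P i then {n-k+1..n} else {})"
  have sub: "{i\<in>{1..n}. P i} \<subseteq> S1 \<union> S2 \<union> S3"
  proof
    fix i assume "i \<in> {i\<in>{1..n}. P i}"
    then have i: "1 \<le> i" "i \<le> n" "P i" by auto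
    show "i \<in> S1 \<union> S2 \<union> S3"
    proof (cases "i \<le> k")
      case True then show ?thesis using i unfolding S1_def by auto
    next
      case False
      show ?thesis
      proof (cases "i \<le> n - k")
        case True then show ?thesis using i False unfolding S2_def by auto
      next
        case F2: False then show ?thesis using i unfolding S3_def by auto
      qed
    qed
  qed
  have "card {i\<in>{1..n}. P i} \<le> card (S1 \<union> S2 \<union> S3)"
    by (rule card_mono[OF _ sub]) (simp add: S1_def S2_def S3_def)
  also have "\<dots> \<le> card S1 + card S2 + card S3"
    by (meson card_Un_le add_le_mono le_trans order_refl)
  also have "\<dots> = (if \<exists>i\<in>{1..k}. P i then k else 0)
     + (if \<exists>i\<in>{k+1..n-k}. P i then n - 2 * k else 0) + (if \<exists>i\<in>{n-k+1..n}. P i then k else 0)"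
    using assms unfolding S1_def S2_def S3_def by (simp add: mult_2)
  finally show ?thesis .
qed

lemma upper:
  fixes n k :: nat and A M :: 'a and G :: "nat \<Rightarrow> nat \<Rightarrow> 'a"
  assumes "1 \<le> k" and nk: "2 * k \<le> n" and AM: "A \<noteq> M"
  shows "lines_count n (\<lambda>i. if i \<le> k then A else M) G \<le> max (2 * (n - k) + 1) (4 * k)"
proof -
  let ?c = "cont n k A M"
  have rc: "row_contains n (\<lambda>i. if i \<le> k then A else M) G i = ?c (G i)" for i
    unfolding row_contains_def cont_def by simp
  have cc: "col_contains n (\<lambda>i. if i \<le> k then A else M) G j = ?c (\<lambda>i. G i j)" for j
    unfolding col_contains_def cont_def by simp
  have dc: "diag_contains n (\<lambda>i. if i \<le> k then A else M) G = ?c (\<lambda>i. G i i)"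
    unfolding diag_contains_def cont_def by simp
  have ac: "antidiag_contains n (\<lambda>i. if i \<le> k then A else M) G = ?c (\<lambda>i. G i (n - i + 1))"
    unfolding antidiag_contains_def cont_def by simp
  define t where "t = (\<exists>i\<in>{1..k}. ?c (G i))"
  define mr where "mr = (\<exists>i\<in>{k+1..n-k}. ?c (G i))"
  define b where "b = (\<exists>i\<in>{n-k+1..n}. ?c (G i))"
  define l where "l = (\<exists>j\<in>{1..k}. ?c (\<lambda>i. G i j))"
  define mc where "mc = (\<exists>j\<in>{k+1..n-k}. ?c (\<lambda>i. G i j))"
  define r where "r = (\<exists>j\<in>{n-k+1..n}. ?c (\<lambda>i. G i j))"
  define dF where "dF = ?c (\<lambda>i. G i i)"
  define dA where "dA = ?c (\<lambda>i. G i (n - i + 1))"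
  have c1: "\<not> (l \<and> r)" if "mr"
  proof
    assume "l \<and> r"
    then obtain j j' where j: "j \<in> {1..k}" "?c (\<lambda>i. G i j)" and j': "j' \<in> {n-k+1..n}" "?c (\<lambda>i. G i j')"
      unfolding l_def r_def by blast
    obtain i where i: "i \<in> {k+1..n-k}" "?c (G i)" using \<open>mr\<close> unfolding mr_def by blast
    have "G i j = M" using L3[OF j(2), of i] i by auto
    moreover have "G i j' = M" using L3[OF j'(2), of i] i by auto
    moreover have "G i j \<noteq> G i j'" using L2[OF i(2) AM nk, of j j'] j j' by auto
    ultimately show False by simp
  qed
  have c2: "\<not> (t \<and> b)" if "mc"
  proof
    assume "t \<and> b"
    then obtain j j' where j: "j \<in> {1..k}" "?c (G j)" and j': "j' \<in> {n-k+1..n}" "?c (G j')"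
      unfolding t_def b_def by blast
    obtain i where i: "i \<in> {k+1..n-k}" "?c (\<lambda>x. G x i)" using \<open>mc\<close> unfolding mc_def by blast
    have "G j i = M" using L3[OF j(2), of i] i by auto
    moreover have "G j' i = M" using L3[OF j'(2), of i] i by auto
    moreover have "G j i \<noteq> G j' i" using L2[OF i(2) AM nk, of j j'] j j' by auto
    ultimately show False by simp
  qed
  have c3: "\<not> (t \<and> r) \<and> \<not> (b \<and> l)" if "dF"
  proof safe
    assume "t" "r"
    then obtain i j where i: "i \<in> {1..k}" "?c (G i)" and j: "j \<in> {n-k+1..n}" "?c (\<lambda>x. G x j)"
      unfolding t_def r_def by blast
    have d: "?c (\<lambda>i. G i i)" using \<open>dF\<close> dF_def by simp
    have "G i i \<noteq> G i j" using L2[OF i(2) AM nk, of i j] i j by auto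
    moreover have "G i j \<noteq> G j j" using L2[OF j(2) AM nk, of i j] i j by auto
    moreover have "G i i \<noteq> G j j" using L2[OF d AM nk, of i j] i j by auto
    moreover have "G i i = A \<or> G i i = M" using L1[OF d, of i] i nk by auto
    moreover have "G i j = A \<or> G i j = M" using L1[OF i(2), of j] j by auto
    moreover have "G j j = A \<or> G j j = M" using L1[OF d, of j] j by auto
    ultimately show False by metis
  next
    assume "b" "l"
    then obtain i j where i: "i \<in> {n-k+1..n}" "?c (G i)" and j: "j \<in> {1..k}" "?c (\<lambda>x. G x j)"
      unfolding b_def l_def by blast
    have d: "?c (\<lambda>i. G i i)" using \<open>dF\<close> dF_def by simp
    have "G i j \<noteq> G i i" using L2[OF i(2) AM nk, of j i] i j by auto
    moreover have "G j j \<noteq> G i j" using L2[OF j(2) AM nk, of j i] i j by auto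
    moreover have "G j j \<noteq> G i i" using L2[OF d AM nk, of j i] i j by auto
    moreover have "G i i = A \<or> G i i = M" using L1[OF d, of i] i by auto
    moreover have "G i j = A \<or> G i j = M" using L1[OF i(2), of j] j nk by auto
    moreover have "G j j = A \<or> G j j = M" using L1[OF d, of j] j nk by auto
    ultimately show False by metis
  qed
  have c4: "\<not> (t \<and> l) \<and> \<not> (b \<and> r)" if "dA"
  proof safe
    assume "t" "l"
    then obtain i j where i: "i \<in> {1..k}" "?c (G i)" and j: "j \<in> {1..k}" "?c (\<lambda>x. G x j)"
      unfolding t_def l_def by blast
    have d: "?c (\<lambda>i. G i (n - i + 1))" using \<open>dA\<close> dA_def by simp
    have e: "n - (n - j + 1) + 1 = j" using j nk by auto
    have top: "n - k < n - x + 1 \<and> n - x + 1 \<le> n" if "x \<in> {1..k}" for x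
      using that nk by auto
    have bot: "1 \<le> n - x + 1 \<and> n - x + 1 \<le> k" if "x \<in> {n-k+1..n}" for x
      using that nk by auto
    have "G i j \<noteq> G i (n - i + 1)" using L2[OF i(2) AM nk, of j "n - i + 1"] i j nk top[OF i(1)] top[OF j(1)] by auto
    moreover have "G i j \<noteq> G (n - j + 1) j" using L2[OF j(2) AM nk, of i "n - j + 1"] i j nk top[OF i(1)] top[OF j(1)] by auto
    moreover have "G i (n - i + 1) \<noteq> G (n - j + 1) j" using L2[OF d AM nk, of i "n - j + 1"] i j nk e top[OF i(1)] top[OF j(1)] by auto
    moreover have "G i (n - i + 1) = A \<or> G i (n - i + 1) = M" using L1[OF i(2), of "n - i + 1"] i nk top[OF i(1)] top[OF j(1)] by auto
    moreover have "G i j = A \<or> G i j = M" using L1[OF i(2), of j] j nk top[OF i(1)] top[OF j(1)] by auto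
    moreover have "G (n - j + 1) j = A \<or> G (n - j + 1) j = M" using L1[OF j(2), of "n - j + 1"] j nk top[OF i(1)] top[OF j(1)] by auto
    ultimately show False by metis
  next
    assume "b" "r"
    then obtain i j where i: "i \<in> {n-k+1..n}" "?c (G i)" and j: "j \<in> {n-k+1..n}" "?c (\<lambda>x. G x j)"
      unfolding b_def r_def by blast
    have d: "?c (\<lambda>i. G i (n - i + 1))" using \<open>dA\<close> dA_def by simp
    have e: "n - (n - j + 1) + 1 = j" using j nk by auto
    have top: "n - k < n - x + 1 \<and> n - x + 1 \<le> n" if "x \<in> {1..k}" for x
      using that nk by auto
    have bot: "1 \<le> n - x + 1 \<and> n - x + 1 \<le> k" if "x \<in> {n-k+1..n}" for x
      using that nk by auto
    have "G i (n - i + 1) \<noteq> G i j" using L2[OF i(2) AM nk, of "n - i + 1" j] i j nk bot[OF i(1)] bot[OF j(1)] by auto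
    moreover have "G (n - j + 1) j \<noteq> G i j" using L2[OF j(2) AM nk, of "n - j + 1" i] i j nk bot[OF i(1)] bot[OF j(1)] by auto
    moreover have "G (n - j + 1) j \<noteq> G i (n - i + 1)" using L2[OF d AM nk, of "n - j + 1" i] i j nk e bot[OF i(1)] bot[OF j(1)] by auto
    moreover have "G i (n - i + 1) = A \<or> G i (n - i + 1) = M" using L1[OF i(2), of "n - i + 1"] i nk bot[OF i(1)] bot[OF j(1)] by auto
    moreover have "G i j = A \<or> G i j = M" using L1[OF i(2), of j] j nk bot[OF i(1)] bot[OF j(1)] by auto
    moreover have "G (n - j + 1) j = A \<or> G (n - j + 1) j = M" using L1[OF j(2), of "n - j + 1"] j nk bot[OF i(1)] bot[OF j(1)] by auto
    ultimately show False by metis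
  qed
  have R: "card {i\<in>{1..n}. ?c (G i)} \<le> (if t then k else 0) + (if mr then n - 2 * k else 0) + (if b then k else 0)"
    unfolding t_def mr_def b_def by (rule card_split[OF nk])
  have C: "card {j\<in>{1..n}. ?c (\<lambda>i. G i j)} \<le> (if l then k else 0) + (if mc then n - 2 * k else 0) + (if r then k else 0)"
    unfolding l_def mc_def r_def by (rule card_split[OF nk])
  have "lines_count n (\<lambda>i. if i \<le> k then A else M) G
      = card {i\<in>{1..n}. ?c (G i)} + card {j\<in>{1..n}. ?c (\<lambda>i. G i j)}
        + (if dF then 1 else 0) + (if dA then 1 else 0)"
    unfolding lines_count_def rc cc dc ac dF_def dA_def by simp
  also have "\<dots> \<le> (if t then k else 0) + (if mr then n - 2 * k else 0) + (if b then k else 0)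
       + ((if l then k else 0) + (if mc then n - 2 * k else 0) + (if r then k else 0))
       + (if dF then 1 else 0) + (if dA then 1 else 0)"
    using R C by linarith
  also have "\<dots> \<le> max (2 * ((n - 2 * k) + k) + 1) (4 * k)"
    by (rule arith5[OF assms(1) c1 c2 c3 c4])
  also have "2 * ((n - 2 * k) + k) + 1 = 2 * (n - k) + 1" using nk by simp
  finally show ?thesis .
qed

lemma lower1:
  fixes n k :: nat and A M :: 'a
  assumes nk: "2 * k \<le> n"
  shows "2 * (n - k) + 1 \<le> lines_count n (\<lambda>i. if i \<le> k then A else M)
           (\<lambda>i j. if i \<le> k \<or> j \<le> k then A else M)"
proof -
  let ?w = "\<lambda>i::nat. if i \<le> k then A else M"
  let ?G = "\<lambda>i j::nat. if i \<le> k \<or> j \<le> k then A else M"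
  have r: "{k+1..n} \<subseteq> {i\<in>{1..n}. row_contains n ?w ?G i}"
    unfolding row_contains_def by auto
  have c: "{k+1..n} \<subseteq> {i\<in>{1..n}. col_contains n ?w ?G i}"
    unfolding col_contains_def by auto
  have d: "diag_contains n ?w ?G"
    unfolding diag_contains_def by auto
  have "n - k \<le> card {i\<in>{1..n}. row_contains n ?w ?G i}"
    using card_mono[OF _ r] by simp
  moreover have "n - k \<le> card {i\<in>{1..n}. col_contains n ?w ?G i}"
    using card_mono[OF _ c] by simp
  ultimately show ?thesis unfolding lines_count_def using d by simp
qed

lemma lower2:
  fixes n k :: nat and A M :: 'a
  assumes nk: "2 * k \<le> n"
  shows "4 * k \<le> lines_count n (\<lambda>i. if i \<le> k then A else M)
           (\<lambda>i j. if (i \<le> k \<and> j \<le> k) \<or> (n - k < i \<and> n - k < j) then A else M)"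
proof -
  let ?w = "\<lambda>i::nat. if i \<le> k then A else M"
  let ?G = "\<lambda>i j::nat. if (i \<le> k \<and> j \<le> k) \<or> (n - k < i \<and> n - k < j) then A else M"
  have r: "{1..k} \<union> {n-k+1..n} \<subseteq> {i\<in>{1..n}. row_contains n ?w ?G i}"
  proof
    fix i assume i: "i \<in> {1..k} \<union> {n-k+1..n}"
    show "i \<in> {i\<in>{1..n}. row_contains n ?w ?G i}"
    proof (cases "i \<le> k")
      case True
      then show ?thesis using i nk unfolding row_contains_def by auto
    next
      case False
      then have "n - k < i" "i \<le> n" using i by auto
      then have "\<forall>j\<in>{1..n}. ?G i j = ?w (n - j + 1)" using False nk by auto
      then show ?thesis using i nk unfolding row_contains_def by auto
    qed
  qed
  have c: "{1..k} \<union> {n-k+1..n} \<subseteq> {j\<in>{1..n}. col_contains n ?w ?G j}"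
  proof
    fix j assume j: "j \<in> {1..k} \<union> {n-k+1..n}"
    show "j \<in> {j\<in>{1..n}. col_contains n ?w ?G j}"
    proof (cases "j \<le> k")
      case True
      then show ?thesis using j nk unfolding col_contains_def by auto
    next
      case False
      then have "n - k < j" "j \<le> n" using j by auto
      then have "\<forall>i\<in>{1..n}. ?G i j = ?w (n - i + 1)" using False nk by auto
      then show ?thesis using j nk unfolding col_contains_def by auto
    qed
  qed
  have cu: "card ({1..k} \<union> {n-k+1..n}) = 2 * k"
    using nk by (subst card_Un_disjoint) auto
  have "2 * k \<le> card {i\<in>{1..n}. row_contains n ?w ?G i}"
    using card_mono[OF _ r] cu by simp
  moreover have "2 * k \<le> card {i\<in>{1..n}. col_contains n ?w ?G i}"
    using card_mono[OF _ c] cu by simp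
  ultimately show ?thesis unfolding lines_count_def by simp
qed

theorem theorem5:
  fixes n k :: nat and A M :: 'a
  assumes "n \<ge> 2" and "1 \<le> k" and "2 * k \<le> n" and "A \<noteq> M"
  shows "f_max n (\<lambda>i. if i \<le> k then A else M) = max (2 * (n - k) + 1) (4 * k)"
proof -
  define w where "w = (\<lambda>i::nat. if i \<le> k then A else M)"
  define S where "S = {lines_count n w G | G. True}"
  define B where "B = max (2 * (n - k) + 1) (4 * k)"
  have ub: "x \<le> B" if "x \<in> S" for x
  proof -
    from that obtain G where "x = lines_count n w G" unfolding S_def by blast
    then show ?thesis using upper[OF assms(2) assms(3) assms(4), of G] unfolding w_def B_def by simp
  qed
  have sub: "S \<subseteq> {..B}" using ub by blast
  have fin: "finite S" by (rule finite_subset[OF sub]) simp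
  have m1: "lines_count n w (\<lambda>i j. if i \<le> k \<or> j \<le> k then A else M) \<in> S"
    unfolding S_def by blast
  have m2: "lines_count n w (\<lambda>i j. if (i \<le> k \<and> j \<le> k) \<or> (n - k < i \<and> n - k < j) then A else M) \<in> S"
    unfolding S_def by blast
  have ne: "S \<noteq> {}" using m1 by blast
  have "Max S \<le> B" using Max_in[OF fin ne] ub by blast
  moreover have "2 * (n - k) + 1 \<le> Max S"
    using lower1[OF assms(3), of A M] Max_ge[OF fin m1] unfolding w_def by linarith
  moreover have "4 * k \<le> Max S"
    using lower2[OF assms(3), of A M] Max_ge[OF fin m2] unfolding w_def by linarith
  ultimately have "Max S = B" unfolding B_def by simp
  then show ?thesis unfolding f_max_def S_def B_def w_def .
qed

end
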